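(* If the designer's preferences $(A_1,A_0,B_1,B_0)$ have at most one nonzero entry, i.e. are of one of the forms $(A_1,0,0,0)$, $(0,A_0,0,0)$, $(0,0,B_1,0)$, $(0,0,0,B_0)$, then a null equilibrium exists.
   Context: A unit mass of individuals has costs $\gamma_i\in\mathbb{R}$ of compliance ($\beta_i=1$) distributed according to a continuously differentiable CDF $F$ with log-concave density $f$ of full support on $\mathbb{R}$. A classifier $\delta=(\delta_1,\delta_0)\in[0,1]^2$ assigns $d_i$ with $\Pr[d_i=s_i\mid s_i]=\delta_{s_i}$ where $\Pr[s_i=\beta_i]=\phi\in(\tfrac12,1]$; individuals with $d_i=1$ receive reward $r\in\mathbb{R}$. Let $\rho(\delta)=(\delta_1+\delta_0-1)(2\phi-1)$; $\delta$ is null iff $\rho=0$. Individuals comply iff $\gamma_i\le r\rho$; compliance rate $\pi=F(r\rho)$. Designer payoffs $(A_1,A_0,B_1,B_0)\in\mathbb{R}_+^4$ ($A_1$: complier with $d_i=1$; $A_0$: complier with $d_i=0$; $B_1$: non-complier with $d_i=0$; $B_0$: non-complier with $d_i=1$), expected payoff $EU_D(\delta\mid r)=\pi[\phi(A_1\delta_1+A_0(1-\delta_1))+(1-\phi)(A_0\delta_0+A_1(1-\delta_0))]+(1-\pi)[\phi(B_1\delta_0+B_0(1-\delta_0))+(1-\phi)(B_0\delta_1+B_1(1-\delta_1))]$. Rewards are budget balanced and each individual also gets $t\pi$, $t\ge0$; individual $i$'s payoff from $r$ given $\delta$ is $U_i(r)=-\gamma_i+r\rho(1-F(r\rho))+tF(r\rho)$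 if $\gamma_i\le r\rho$, else $-r\rho F(r\rho)+tF(r\rho)$. The median individual has cost $\gamma_\mu$ with $F(\gamma_\mu)=\tfrac12$. An equilibrium is a pair $(r^*,\delta^* )$ such that $r^*$ maximizes $U_\mu(r)$ given $\delta^*$ and $\delta^*$ maximizes $EU_D(\delta\mid r^* )$ over $[0,1]^2$; a null equilibrium is one with $r^*=0$ and/or $\delta^*$ null. *)

theory Defs
  imports "HOL-Analysis.Analysis"
begin

definition classifiers :: "(real \<times> real) set" where
  "classifiers = {0..1} \<times> {0..1}"

definition rho :: "real \<Rightarrow> real \<times> real \<Rightarrow> real" where
  "rho phi d = (fst d + snd d - 1) * (2 * phi - 1)"

definition null_classifier :: "real \<Rightarrow> real \<times> real \<Rightarrow> bool" where
  "null_classifier phi d \<longleftrightarrow> rho phi d = 0"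

definition EU_D :: "(real \<Rightarrow> real) \<Rightarrow> real \<Rightarrow> real \<Rightarrow> real \<Rightarrow> real \<Rightarrow> real
                   \<Rightarrow> real \<times> real \<Rightarrow> real \<Rightarrow> real" where
  "EU_D F phi A1 A0 B1 B0 d r =
     (let d1 = fst d; d0 = snd d; pi = F (r * rho phi d) in
      pi * (phi * (A1 * d1 + A0 * (1 - d1)) + (1 - phi) * (A0 * d0 + A1 * (1 - d0)))
      + (1 - pi) * (phi * (B1 * d0 + B0 * (1 - d0)) + (1 - phi) * (B0 * d1 + B1 * (1 - d1))))"

definition U_ind :: "(real \<Rightarrow> real) \<Rightarrow> real \<Rightarrow> real \<Rightarrow> real \<Rightarrow> real \<times> real \<Rightarrow> real \<Rightarrow> real" where
  "U_ind F phi t gamma d r =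
     (let p = r * rho phi d in
      if gamma \<le> p then - gamma + p * (1 - F p) + t * F p
      else - p * F p + t * F p)"

definition equilibrium ::
  "(real \<Rightarrow> real) \<Rightarrow> real \<Rightarrow> real \<Rightarrow> real \<Rightarrow> real \<Rightarrow> real \<Rightarrow> real \<Rightarrow> real
   \<Rightarrow> real \<Rightarrow> real \<times> real \<Rightarrow> bool" where
  "equilibrium F phi t gmu A1 A0 B1 B0 r d \<longleftrightarrow>
     d \<in> classifiers \<and>
     (\<forall>r'. U_ind F phi t gmu d r' \<le> U_ind F phi t gmu d r) \<and>
     (\<forall>d'\<in>classifiers. EU_D F phi A1 A0 B1 B0 d' r \<le> EU_D F phi A1 A0 B1 B0 d r)"

definition null_equilibrium ::
  "(real \<Rightarrow> real) \<Rightarrow> real \<Rightarrow> real \<Rightarrow> real \<Rightarrow> real \<Rightarrow> real \<Rightarrow> real \<Rightarrow> real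
   \<Rightarrow> real \<Rightarrow> real \<times> real \<Rightarrow> bool" where
  "null_equilibrium F phi t gmu A1 A0 B1 B0 r d \<longleftrightarrow>
     equilibrium F phi t gmu A1 A0 B1 B0 r d \<and> (r = 0 \<or> null_classifier phi d)"

end

theory Submission
  imports Defs
begin

lemma null_U_const:
  assumes "rho phi d = 0"
  shows "U_ind F phi t g d r' = U_ind F phi t g d r"
  using assms by (simp add: U_ind_def Let_def)

theorem corollary3:
  fixes F f :: "real \<Rightarrow> real" and phi t gmu A1 A0 B1 B0 :: real
  assumes F_deriv: "\<And>x. (F has_real_derivative f x) (at x)"
      and f_cont: "continuous_on UNIV f"
      and f_pos: "\<And>x. f x > 0"
      and f_logconcave: "concave_on UNIV (\<lambda>x. ln (f x))"
      and F_bot: "(F \<longlongrightarrow> 0) at_bot"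
      and F_top: "(F \<longlongrightarrow> 1) at_top"
      and phi: "1/2 < phi" "phi \<le> 1"
      and t: "t \<ge> 0"
      and median: "F gmu = 1/2"
      and nonneg: "A1 \<ge> 0" "A0 \<ge> 0" "B1 \<ge> 0" "B0 \<ge> 0"
      and prefs: "(A0 = 0 \<and> B1 = 0 \<and> B0 = 0) \<or> (A1 = 0 \<and> B1 = 0 \<and> B0 = 0)
                  \<or> (A1 = 0 \<and> A0 = 0 \<and> B0 = 0) \<or> (A1 = 0 \<and> A0 = 0 \<and> B1 = 0)"
  shows "\<exists>r d. null_equilibrium F phi t gmu A1 A0 B1 B0 r d"
proof -
  have mono: "F x \<le> F y" if "x \<le> y" for x y
    using DERIV_nonneg_imp_nondecreasing[OF that] F_deriv f_pos
    by (metis less_imp_le)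
  define c where "c = F 0"
  have c0: "0 \<le> c"
  proof (rule tendsto_upperbound[OF F_bot])
    show "\<forall>\<^sub>F x in at_bot. F x \<le> c" unfolding c_def
      using eventually_le_at_bot[of "0::real"] mono by (rule eventually_mono)
  qed simp
  have c1: "c \<le> 1"
  proof (rule tendsto_lowerbound[OF F_top])
    show "\<forall>\<^sub>F x in at_top. c \<le> F x" unfolding c_def
      using eventually_ge_at_top[of "0::real"] mono by (rule eventually_mono)
  qed simp
  have EU0: "EU_D F phi A1 A0 B1 B0 d 0 =
     c * (phi * (A1 * fst d + A0 * (1 - fst d)) + (1 - phi) * (A0 * snd d + A1 * (1 - snd d)))
      + (1 - c) * (phi * (B1 * snd d + B0 * (1 - snd d)) + (1 - phi) * (B0 * fst d + B1 * (1 - fst d)))"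
    for d by (simp add: EU_D_def Let_def c_def)
  have key: "\<exists>d. d \<in> classifiers \<and> fst d + snd d = 1 \<and>
      (\<forall>d'\<in>classifiers. EU_D F phi A1 A0 B1 B0 d' 0 \<le> EU_D F phi A1 A0 B1 B0 d 0)"
  proof -
    have cb: "c * x \<le> c * y" "(1-c) * x \<le> (1 - c) * y" if "x \<le> y" for x y
      using that c0 c1 by (auto intro: mult_left_mono)
    consider "A0 = 0 \<and> B1 = 0 \<and> B0 = 0" | "A1 = 0 \<and> B1 = 0 \<and> B0 = 0"
      | "A1 = 0 \<and> A0 = 0 \<and> B0 = 0" | "A1 = 0 \<and> A0 = 0 \<and> B1 = 0" using prefs by blast
    then show ?thesis
    proof cases
      case 1
      show ?thesis
      proof (intro exI[of _ "(1,0)"] conjI ballI)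
        fix d' assume "d' \<in> classifiers"
        then have h: "phi * (A1 * fst d') + (1 - phi) * (A1 * (1 - snd d')) \<le> phi * A1 + (1 - phi) * A1"
          using phi nonneg by (intro add_mono mult_left_mono) (auto simp: classifiers_def mult_left_le)
        show "EU_D F phi A1 A0 B1 B0 d' 0 \<le> EU_D F phi A1 A0 B1 B0 (1,0) 0"
          unfolding EU0 using 1 cb(1)[OF h] by simp
      qed (auto simp: classifiers_def)
    next
      case 2
      show ?thesis
      proof (intro exI[of _ "(0,1)"] conjI ballI)
        fix d' assume "d' \<in> classifiers"
        then have h: "phi * (A0 * (1 - fst d')) + (1 - phi) * (A0 * snd d') \<le> phi * A0 + (1 - phi) * A0"
          using phi nonneg by (intro add_mono mult_left_mono) (auto simp: classifiers_def mult_left_le)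
        show "EU_D F phi A1 A0 B1 B0 d' 0 \<le> EU_D F phi A1 A0 B1 B0 (0,1) 0"
          unfolding EU0 using 2 cb(1)[OF h] by simp
      qed (auto simp: classifiers_def)
    next
      case 3
      show ?thesis
      proof (intro exI[of _ "(0,1)"] conjI ballI)
        fix d' assume "d' \<in> classifiers"
        then have h: "phi * (B1 * snd d') + (1 - phi) * (B1 * (1 - fst d')) \<le> phi * B1 + (1 - phi) * B1"
          using phi nonneg by (intro add_mono mult_left_mono) (auto simp: classifiers_def mult_left_le)
        show "EU_D F phi A1 A0 B1 B0 d' 0 \<le> EU_D F phi A1 A0 B1 B0 (0,1) 0"
          unfolding EU0 using 3 cb(2)[OF h] by simp
      qed (auto simp: classifiers_def)
    next
      case 4
      show ?thesis
      proof (intro exI[of _ "(1,0)"] conjI ballI)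
        fix d' assume "d' \<in> classifiers"
        then have h: "phi * (B0 * (1 - snd d')) + (1 - phi) * (B0 * fst d') \<le> phi * B0 + (1 - phi) * B0"
          using phi nonneg by (intro add_mono mult_left_mono) (auto simp: classifiers_def mult_left_le)
        show "EU_D F phi A1 A0 B1 B0 d' 0 \<le> EU_D F phi A1 A0 B1 B0 (1,0) 0"
          unfolding EU0 using 4 cb(2)[OF h] by simp
      qed (auto simp: classifiers_def)
    qed
  qed
  then obtain d where d: "d \<in> classifiers" "fst d + snd d = 1"
     "\<forall>d'\<in>classifiers. EU_D F phi A1 A0 B1 B0 d' 0 \<le> EU_D F phi A1 A0 B1 B0 d 0" by blast
  have rz: "rho phi d = 0" using d(2) by (simp add: rho_def)
  have U: "\<forall>r'. U_ind F phi t gmu d r' \<le> U_ind F phi t gmu d 0"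
    using null_U_const[OF rz] by (metis order_refl)
  have "null_equilibrium F phi t gmu A1 A0 B1 B0 0 d"
    unfolding null_equilibrium_def equilibrium_def
    using d U by blast
  then show ?thesis by blast
qed

end
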